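(* Let $R$ be a ring and $J\subseteq J(R)$ an ideal of $R$ such that idempotents lift modulo $J$. Then the following are equivalent: (1) $R$ is an abelian ring; (2) $R/J$ is an abelian ring and idempotents lift uniquely modulo $J$.
   Context: All rings are associative with identity; $J(R)$ is the Jacobson radical. A ring is abelian if all its idempotents are central. Idempotents lift modulo an ideal $J$ if for every $a\in R$ with $a^2-a\in J$ there exists an idempotent $e\in R$ with $e-a\in J$; they lift uniquely modulo $J$ if this idempotent $e$ is uniquely determined by $a$. *)

theory Defs
  imports "HOL-Algebra.Algebra"
begin

definition idem :: "('a, 'b) ring_scheme \<Rightarrow> 'a \<Rightarrow> bool" where
  "idem R e \<longleftrightarrow> e \<in> carrier R \<and> e \<otimes>\<^bsub>R\<^esub> e = e"

definition abelian_ring :: "('a, 'b) ring_scheme \<Rightarrow> bool" where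
  "abelian_ring R \<longleftrightarrow> (\<forall>e. idem R e \<longrightarrow> (\<forall>x\<in>carrier R. e \<otimes>\<^bsub>R\<^esub> x = x \<otimes>\<^bsub>R\<^esub> e))"

definition left_ideal :: "'a set \<Rightarrow> ('a, 'b) ring_scheme \<Rightarrow> bool" where
  "left_ideal I R \<longleftrightarrow> additive_subgroup I R \<and>
     (\<forall>r\<in>carrier R. \<forall>x\<in>I. r \<otimes>\<^bsub>R\<^esub> x \<in> I)"

definition maximal_left_ideal :: "'a set \<Rightarrow> ('a, 'b) ring_scheme \<Rightarrow> bool" where
  "maximal_left_ideal I R \<longleftrightarrow> left_ideal I R \<and> I \<noteq> carrier R \<and>
     (\<forall>K. left_ideal K R \<and> I \<subseteq> K \<longrightarrow> K = I \<or> K = carrier R)"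

definition jacobson :: "('a, 'b) ring_scheme \<Rightarrow> 'a set" where
  "jacobson R = carrier R \<inter> \<Inter> {I. maximal_left_ideal I R}"

definition idempotents_lift :: "('a, 'b) ring_scheme \<Rightarrow> 'a set \<Rightarrow> bool" where
  "idempotents_lift R J \<longleftrightarrow> (\<forall>a\<in>carrier R. a \<otimes>\<^bsub>R\<^esub> a \<ominus>\<^bsub>R\<^esub> a \<in> J \<longrightarrow>
     (\<exists>e. idem R e \<and> e \<ominus>\<^bsub>R\<^esub> a \<in> J))"

definition idempotents_lift_uniquely :: "('a, 'b) ring_scheme \<Rightarrow> 'a set \<Rightarrow> bool" where
  "idempotents_lift_uniquely R J \<longleftrightarrow> (\<forall>a\<in>carrier R. a \<otimes>\<^bsub>R\<^esub> a \<ominus>\<^bsub>R\<^esub> a \<in> J \<longrightarrow>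
     (\<exists>!e. idem R e \<and> e \<ominus>\<^bsub>R\<^esub> a \<in> J))"

end

theory Submission
  imports Defs
begin

lemma chain_union_left_ideal:
  fixes R (structure) and C :: "'a set set"
  assumes R: "ring R" and ne: "C \<noteq> {}"
    and ch: "\<forall>U\<in>C. \<forall>V\<in>C. U \<subseteq> V \<or> V \<subseteq> U"
    and li: "\<forall>K\<in>C. left_ideal K R"
  shows "left_ideal (\<Union>C) R"
proof -
  interpret ring R by (rule R)
  have sg: "\<And>K. K \<in> C \<Longrightarrow> additive_subgroup K R" using li by (simp add: left_ideal_def)
  have "subgroup (\<Union>C) (add_monoid R)"
  proof
    show "\<Union>C \<subseteq> carrier (add_monoid R)"
    proof
      fix x assume "x \<in> \<Union>C"
      then obtain K1 where "K1 \<in> C" "x \<in> K1" by blast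
      then show "x \<in> carrier (add_monoid R)"
        using additive_subgroup.a_subset[OF sg[of K1]] by auto
    qed
  next
    fix x y assume "x \<in> \<Union>C" "y \<in> \<Union>C"
    then obtain K1 K2 where XY: "K1 \<in> C" "K2 \<in> C" "x \<in> K1" "y \<in> K2" by blast
    have "x \<oplus> y \<in> \<Union>C"
    proof (cases "K1 \<subseteq> K2")
      case True
      then have "x \<oplus> y \<in> K2" using XY additive_subgroup.a_closed[OF sg[of K2]] by blast
      then show ?thesis using XY by blast
    next
      case False
      then have "K2 \<subseteq> K1" using ch XY by blast
      then have "x \<oplus> y \<in> K1" using XY additive_subgroup.a_closed[OF sg[of K1]] by blast
      then show ?thesis using XY by blast
    qed
    then show "x \<otimes>\<^bsub>add_monoid R\<^esub> y \<in> \<Union>C" by simp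
  next
    obtain K where "K \<in> C" using ne by blast
    then have "\<zero> \<in> \<Union>C" using additive_subgroup.zero_closed[OF sg[of K]] by blast
    then show "\<one>\<^bsub>add_monoid R\<^esub> \<in> \<Union>C" by simp
  next
    fix x assume "x \<in> \<Union>C"
    then obtain K1 where "K1 \<in> C" "x \<in> K1" by blast
    then have "\<ominus> x \<in> \<Union>C" using additive_subgroup.a_inv_closed[OF sg[of K1]] by blast
    then show "inv\<^bsub>add_monoid R\<^esub> x \<in> \<Union>C" by (simp add: a_inv_def)
  qed
  then have "additive_subgroup (\<Union>C) R" by (rule additive_subgroupI)
  moreover have "\<forall>r\<in>carrier R. \<forall>x\<in>\<Union>C. r \<otimes> x \<in> \<Union>C"
    using li unfolding left_ideal_def by blast
  ultimately show ?thesis unfolding left_ideal_def by blast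
qed

lemma jacobson_idem_zero:
  fixes R (structure) and g :: 'a
  assumes R: "ring R" and g: "idem R g" and gJ: "g \<in> jacobson R"
  shows "g = \<zero>\<^bsub>R\<^esub>"
proof -
  interpret ring R by (rule R)
  have gc: "g \<in> carrier R" and gg: "g \<otimes> g = g" using g by (auto simp: idem_def)
  have omg: "\<one> \<ominus> g \<in> carrier R" using gc by simp
  define L where "L = {r \<otimes> (\<one> \<ominus> g) | r. r \<in> carrier R}"
  show ?thesis
  proof (cases "\<one> \<in> L")
    case True
    then obtain r where rc: "r \<in> carrier R" and r1: "\<one> = r \<otimes> (\<one> \<ominus> g)" unfolding L_def by blast
    have e1: "(\<one> \<ominus> g) \<otimes> g = \<zero>"
      using gc gg by (simp add: minus_eq l_distr l_minus r_neg)
    have "g = \<one> \<otimes> g" using gc by simp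
    also have "\<dots> = (r \<otimes> (\<one> \<ominus> g)) \<otimes> g" using r1 by simp
    also have "\<dots> = r \<otimes> ((\<one> \<ominus> g) \<otimes> g)" using rc gc omg by (simp only: m_assoc)
    also have "\<dots> = \<zero>" using e1 rc by simp
    finally show ?thesis .
  next
    case False
    have Lsub: "subgroup L (add_monoid R)"
    proof
      show "L \<subseteq> carrier (add_monoid R)" using omg unfolding L_def by auto
    next
      fix x y assume "x \<in> L" "y \<in> L"
      then obtain a b where ab: "a \<in> carrier R" "b \<in> carrier R" "x = a \<otimes> (\<one> \<ominus> g)" "y = b \<otimes> (\<one> \<ominus> g)"
        unfolding L_def by blast
      then have "x \<oplus> y = (a \<oplus> b) \<otimes> (\<one> \<ominus> g)" using omg by (simp add: l_distr)
      moreover have "a \<oplus> b \<in> carrier R" using ab by simp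
      ultimately have "x \<oplus> y \<in> L" unfolding L_def by blast
      then show "x \<otimes>\<^bsub>add_monoid R\<^esub> y \<in> L" by simp
    next
      have "\<zero> = \<zero> \<otimes> (\<one> \<ominus> g)" using omg by simp
      then have "\<zero> \<in> L" unfolding L_def by blast
      then show "\<one>\<^bsub>add_monoid R\<^esub> \<in> L" by simp
    next
      fix x assume "x \<in> L"
      then obtain a where a: "a \<in> carrier R" "x = a \<otimes> (\<one> \<ominus> g)" unfolding L_def by blast
      then have "\<ominus> x = (\<ominus> a) \<otimes> (\<one> \<ominus> g)" using omg by (simp add: l_minus)
      moreover have "\<ominus> a \<in> carrier R" using a by simp
      ultimately have "\<ominus> x \<in> L" unfolding L_def by blast
      then show "inv\<^bsub>add_monoid R\<^esub> x \<in> L" by (simp add: a_inv_def)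
    qed
    have Lmul: "\<forall>r\<in>carrier R. \<forall>x\<in>L. r \<otimes> x \<in> L"
    proof (intro ballI)
      fix r x assume rc: "r \<in> carrier R" and "x \<in> L"
      then obtain a where a: "a \<in> carrier R" "x = a \<otimes> (\<one> \<ominus> g)" unfolding L_def by blast
      then have "r \<otimes> x = (r \<otimes> a) \<otimes> (\<one> \<ominus> g)" using omg rc by (simp add: m_assoc)
      moreover have "r \<otimes> a \<in> carrier R" using a rc by simp
      ultimately show "r \<otimes> x \<in> L" unfolding L_def by blast
    qed
    have Lli: "left_ideal L R" unfolding left_ideal_def
      using additive_subgroupI[OF Lsub] Lmul by blast
    define A where "A = {K. left_ideal K R \<and> L \<subseteq> K \<and> \<one> \<notin> K}"
    have "\<exists>M\<in>A. \<forall>Z\<in>A. M \<subseteq> Z \<longrightarrow> Z = M"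
    proof (rule subset_Zorn_nonempty)
      show "A \<noteq> {}" using Lli False unfolding A_def by blast
    next
      fix C assume ne: "C \<noteq> {}" and ch: "subset.chain A C"
      then have ch1: "C \<subseteq> A" and ch2: "\<forall>U\<in>C. \<forall>V\<in>C. U \<subseteq> V \<or> V \<subseteq> U"
        by (auto simp: subset_chain_def)
      have "\<forall>K\<in>C. left_ideal K R" using ch1 unfolding A_def by blast
      then have "left_ideal (\<Union>C) R"
        by (rule chain_union_left_ideal[OF R ne ch2])
      moreover have "L \<subseteq> \<Union>C" using ne ch1 unfolding A_def by blast
      moreover have "\<one> \<notin> \<Union>C" using ch1 unfolding A_def by blast
      ultimately show "\<Union>C \<in> A" unfolding A_def by blast
    qed
    then obtain M where M: "M \<in> A" and Mmax: "\<forall>Z\<in>A. M \<subseteq> Z \<longrightarrow> Z = M" by blast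
    have Mli: "left_ideal M R" and LM: "L \<subseteq> M" and oM: "\<one> \<notin> M" using M unfolding A_def by auto
    have "maximal_left_ideal M R"
      unfolding maximal_left_ideal_def
    proof (intro conjI allI impI)
      show "left_ideal M R" by (rule Mli)
      show "M \<noteq> carrier R" using oM by auto
    next
      fix K assume K: "left_ideal K R \<and> M \<subseteq> K"
      show "K = M \<or> K = carrier R"
      proof (cases "\<one> \<in> K")
        case True
        have "additive_subgroup K R" using K unfolding left_ideal_def by blast
        then have "K \<subseteq> carrier R" by (rule additive_subgroup.a_subset)
        moreover have "carrier R \<subseteq> K"
        proof
          fix r assume rc: "r \<in> carrier R"
          have "\<forall>r\<in>carrier R. \<forall>x\<in>K. r \<otimes> x \<in> K" using K unfolding left_ideal_def by blast
          then have "r \<otimes> \<one> \<in> K" using True rc by blast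
          then show "r \<in> K" using rc by simp
        qed
        ultimately show ?thesis by blast
      next
        case False
        then have "K \<in> A" using K LM unfolding A_def by blast
        then show ?thesis using Mmax K by blast
      qed
    qed
    then have gM: "g \<in> M" using gJ unfolding jacobson_def by blast
    have "\<one> \<ominus> g = \<one> \<otimes> (\<one> \<ominus> g)" using omg by simp
    then have "\<one> \<ominus> g \<in> L" unfolding L_def by blast
    then have "\<one> \<ominus> g \<in> M" using LM by blast
    moreover have "additive_subgroup M R" using Mli unfolding left_ideal_def by blast
    ultimately have "(\<one> \<ominus> g) \<oplus> g \<in> M" using gM by (simp add: additive_subgroup.a_closed)
    moreover have "(\<one> \<ominus> g) \<oplus> g = \<one>" using gc by (simp add: minus_eq a_assoc l_neg)
    ultimately show ?thesis using oM by simp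
  qed
qed

lemma quot_carrier:
  fixes R (structure)
  shows "W \<in> carrier (R Quot J) \<longleftrightarrow> (\<exists>a\<in>carrier R. W = J +> a)"
  unfolding FactRing_def A_RCOSETS_def' by auto

lemma quot_mult:
  fixes R (structure)
  assumes "ideal J R" "a \<in> carrier R" "b \<in> carrier R"
  shows "(J +> a) \<otimes>\<^bsub>R Quot J\<^esub> (J +> b) = J +> (a \<otimes> b)"
  using ideal.rcoset_mult_add[OF assms] unfolding FactRing_def by simp

lemma quot_eq:
  fixes R (structure)
  assumes I: "ideal J R" and a: "a \<in> carrier R" and b: "b \<in> carrier R"
  shows "(J +> a = J +> b) \<longleftrightarrow> a \<ominus> b \<in> J"
proof -
  interpret ideal J R by (rule I)
  have sg: "abelian_subgroup J R"
    by (simp add: abelian_subgroupI3 is_additive_subgroup ring.is_abelian_group ring_axioms)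
  show ?thesis
  proof
    assume eq: "J +> a = J +> b"
    have "a \<in> J +> a" using a by (simp add: abelian_subgroup.a_rcos_self[OF sg])
    then have "a \<in> J +> b" using eq by simp
    then show "a \<ominus> b \<in> J" using abelian_subgroup.a_rcos_module_minus[OF sg ring_axioms b a] by simp
  next
    assume "a \<ominus> b \<in> J"
    then have "a \<in> J +> b" using abelian_subgroup.a_rcos_module_minus[OF sg ring_axioms b a] by simp
    then show "J +> a = J +> b"
      using abelian_subgroup.a_repr_independence'[OF sg _ b] by simp
  qed
qed

lemma central_idem_eq:
  fixes R (structure)
  assumes R: "ring R" and I: "ideal J R" and JJ: "J \<subseteq> jacobson R"
    and ab: "abelian_ring R" and e: "idem R e" and f: "idem R f"
    and a: "a \<in> carrier R" and ea: "e \<ominus> a \<in> J" and fa: "f \<ominus> a \<in> J"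
  shows "e = e \<otimes> f"
proof -
  interpret ideal J R by (rule I)
  have ec: "e \<in> carrier R" and ee: "e \<otimes> e = e" using e by (auto simp: idem_def)
  have fc: "f \<in> carrier R" and ff: "f \<otimes> f = f" using f by (auto simp: idem_def)
  have ecent: "\<And>x. x \<in> carrier R \<Longrightarrow> e \<otimes> x = x \<otimes> e" using ab e unfolding abelian_ring_def by blast
  have eqd: "(e \<ominus> a) \<ominus> (f \<ominus> a) = e \<ominus> f" using ec fc a
  proof -
    have "(e \<ominus> a) \<ominus> (f \<ominus> a) = e \<oplus> (a \<oplus> (\<ominus> a \<oplus> \<ominus> f))" using ec fc a
      by (simp add: minus_eq minus_add a_ac)
    also have "\<dots> = e \<ominus> f" using ec fc a by (simp add: r_neg2 minus_eq)
    finally show ?thesis .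
  qed
  have "(e \<ominus> a) \<ominus> (f \<ominus> a) \<in> J"
    using ea fa by (simp add: minus_eq a_closed a_inv_closed)
  then have efJ: "e \<ominus> f \<in> J" using eqd by simp
  define h where "h = \<one> \<ominus> f"
  have hc: "h \<in> carrier R" using fc h_def by simp
  have fh: "f \<otimes> h = \<zero>" unfolding h_def using fc ff by (simp add: minus_eq r_distr r_minus r_neg)
  have hh: "h \<otimes> h = h"
  proof -
    have "h \<otimes> h = \<one> \<otimes> h \<ominus> f \<otimes> h" unfolding h_def using fc
      by (simp add: minus_eq l_distr l_minus)
    then show ?thesis using fh hc by (simp add: minus_eq)
  qed
  define g where "g = e \<otimes> h"
  have gc: "g \<in> carrier R" using g_def ec hc by simp
  have "g \<otimes> g = e \<otimes> ((h \<otimes> e) \<otimes> h)" unfolding g_def using ec hc by (simp add: m_assoc)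
  also have "\<dots> = e \<otimes> ((e \<otimes> h) \<otimes> h)" using ecent[OF hc] by simp
  also have "\<dots> = (e \<otimes> e) \<otimes> (h \<otimes> h)" using ec hc by (simp add: m_assoc)
  also have "\<dots> = g" unfolding g_def using ee hh by simp
  finally have gidem: "idem R g" using gc by (simp add: idem_def)
  have "g = e \<otimes> (e \<ominus> f)" unfolding g_def h_def using ec fc ee
    by (simp add: minus_eq r_distr r_minus)
  then have "g \<in> J" using efJ ec by (simp add: I_l_closed)
  then have "g = \<zero>" using jacobson_idem_zero[OF R gidem] JJ by blast
  then have "e \<ominus> e \<otimes> f = \<zero>" unfolding g_def h_def using ec fc
    by (simp add: minus_eq r_distr r_minus)
  then show ?thesis using ec fc by simp
qed

lemma idem_add:
  fixes R (structure)
  assumes R: "ring R" and e: "idem R e" and n: "n \<in> carrier R"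
    and nn: "n \<otimes> n = \<zero>" and en: "e \<otimes> n \<oplus> n \<otimes> e = n"
  shows "idem R (e \<oplus> n)"
proof -
  interpret ring R by (rule R)
  have ec: "e \<in> carrier R" and ee: "e \<otimes> e = e" using e by (auto simp: idem_def)
  have "(e \<oplus> n) \<otimes> (e \<oplus> n) = e \<otimes> e \<oplus> (e \<otimes> n \<oplus> n \<otimes> e) \<oplus> n \<otimes> n"
    using ec n by (simp add: l_distr r_distr a_ac)
  also have "\<dots> = e \<oplus> n" using ee en nn ec n by simp
  finally show ?thesis using ec n by (simp add: idem_def)
qed

theorem lemma2p9:
  fixes R (structure) and J :: "'a set"
  assumes "ring R" and "ideal J R" and "J \<subseteq> jacobson R"
    and "idempotents_lift R J"
  shows "abelian_ring R \<longleftrightarrow> abelian_ring (R Quot J) \<and> idempotents_lift_uniquely R J"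
proof -
  note R = assms(1) and I = assms(2) and JJ = assms(3) and lift = assms(4)
  interpret ideal J R by (rule I)
  show ?thesis
  proof
    assume ab: "abelian_ring R"
    have "abelian_ring (R Quot J)"
      unfolding abelian_ring_def
    proof (intro allI impI ballI)
      fix E Y assume E: "idem (R Quot J) E" and Y: "Y \<in> carrier (R Quot J)"
      obtain a where a: "a \<in> carrier R" "E = J +> a" using E unfolding idem_def quot_carrier by blast
      obtain b where b: "b \<in> carrier R" "Y = J +> b" using Y unfolding quot_carrier by blast
      have "J +> (a \<otimes> a) = J +> a" using E a quot_mult[OF I a(1) a(1)] unfolding idem_def by simp
      then have "a \<otimes> a \<ominus> a \<in> J" using quot_eq[OF I] a by simp
      then obtain f where f: "idem R f" "f \<ominus> a \<in> J" using lift a unfolding idempotents_lift_def by blast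
      have fc: "f \<in> carrier R" using f by (simp add: idem_def)
      have Ef: "E = J +> f" using quot_eq[OF I fc a(1)] f a by simp
      have "f \<otimes> b = b \<otimes> f" using ab f b unfolding abelian_ring_def by blast
      then show "E \<otimes>\<^bsub>R Quot J\<^esub> Y = Y \<otimes>\<^bsub>R Quot J\<^esub> E"
        using Ef b quot_mult[OF I fc b(1)] quot_mult[OF I b(1) fc] by simp
    qed
    moreover have "idempotents_lift_uniquely R J"
      unfolding idempotents_lift_uniquely_def
    proof (intro ballI impI)
      fix a assume a: "a \<in> carrier R" and aa: "a \<otimes> a \<ominus> a \<in> J"
      then obtain e where e: "idem R e" "e \<ominus> a \<in> J" using lift unfolding idempotents_lift_def by blast
      show "\<exists>!e. idem R e \<and> e \<ominus> a \<in> J"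
      proof (rule ex1I[of _ e])
        show "idem R e \<and> e \<ominus> a \<in> J" using e by blast
      next
        fix f assume f: "idem R f \<and> f \<ominus> a \<in> J"
        have fc: "f \<in> carrier R" using f by (simp add: idem_def)
        have 1: "e = e \<otimes> f" using central_idem_eq[OF R I JJ ab e(1) _ a e(2)] f by blast
        have 2: "f = f \<otimes> e" using central_idem_eq[OF R I JJ ab _ e(1) a _ e(2)] f by blast
        have "f \<otimes> e = e \<otimes> f" using ab f e unfolding abelian_ring_def idem_def by blast
        then show "f = e" using 1 2 by simp
      qed
    qed
    ultimately show "abelian_ring (R Quot J) \<and> idempotents_lift_uniquely R J" by blast
  next
    assume "abelian_ring (R Quot J) \<and> idempotents_lift_uniquely R J"
    then have abq: "abelian_ring (R Quot J)" and uniq: "idempotents_lift_uniquely R J" by auto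
    show "abelian_ring R"
      unfolding abelian_ring_def
    proof (intro allI impI ballI)
      fix e x assume e: "idem R e" and x: "x \<in> carrier R"
      have ec: "e \<in> carrier R" and ee: "e \<otimes> e = e" using e by (auto simp: idem_def)
      have oe: "\<one> \<ominus> e \<in> carrier R" using ec by simp
      have E: "idem (R Quot J) (J +> e)"
        unfolding idem_def quot_carrier using ec ee quot_mult[OF I ec ec] by auto
      have Xc: "J +> x \<in> carrier (R Quot J)" unfolding quot_carrier using x by blast
      have "(J +> e) \<otimes>\<^bsub>R Quot J\<^esub> (J +> x) = (J +> x) \<otimes>\<^bsub>R Quot J\<^esub> (J +> e)"
        using abq E Xc unfolding abelian_ring_def by blast
      then have qq: "J +> (e \<otimes> x) = J +> (x \<otimes> e)"
        using quot_mult[OF I ec x] quot_mult[OF I x ec] by simp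
      have d1: "e \<otimes> x \<ominus> x \<otimes> e \<in> J" using qq quot_eq[OF I] ec x by simp
      have d2: "x \<otimes> e \<ominus> e \<otimes> x \<in> J" using qq[symmetric] quot_eq[OF I] ec x by simp
      have e1: "e \<otimes> (\<one> \<ominus> e) = \<zero>" using ec ee by (simp add: minus_eq r_distr r_minus r_neg)
      have e2: "(\<one> \<ominus> e) \<otimes> e = \<zero>" using ec ee by (simp add: minus_eq l_distr l_minus r_neg)
      have eeJ: "e \<otimes> e \<ominus> e \<in> J" using ee ec by (simp add: minus_eq r_neg additive_subgroup.zero_closed[OF is_additive_subgroup])
      have eJ: "e \<ominus> e \<in> J" using ec by (simp add: minus_eq r_neg additive_subgroup.zero_closed[OF is_additive_subgroup])
      have uq: "\<And>y. idem R y \<Longrightarrow> y \<ominus> e \<in> J \<Longrightarrow> y = e"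
        using uniq ec eeJ e eJ unfolding idempotents_lift_uniquely_def by blast
      define n where "n = e \<otimes> x \<otimes> (\<one> \<ominus> e)"
      have nc: "n \<in> carrier R" unfolding n_def using ec x oe by simp
      have en: "e \<otimes> n = n" unfolding n_def using ec x oe ee by (simp add: m_assoc[symmetric])
      have ne: "n \<otimes> e = \<zero>" unfolding n_def using ec x oe e2 by (simp add: m_assoc)
      have nn: "n \<otimes> n = \<zero>"
      proof -
        have "n \<otimes> n = (n \<otimes> e) \<otimes> n" using en nc ec by (simp add: m_assoc)
        then show ?thesis using ne nc by simp
      qed
      have "idem R (e \<oplus> n)" using idem_add[OF R e nc nn] en ne nc by simp
      moreover have "(e \<oplus> n) \<ominus> e = n" using ec nc by (simp add: minus_eq a_comm[of e n] a_assoc r_neg)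
      moreover have "n \<in> J"
      proof -
        have "(e \<otimes> x \<ominus> x \<otimes> e) \<otimes> (\<one> \<ominus> e) = n \<ominus> x \<otimes> (e \<otimes> (\<one> \<ominus> e))"
          unfolding n_def using ec x oe by (simp add: minus_eq l_distr l_minus m_assoc)
        also have "\<dots> = n" using e1 x nc by (simp add: minus_eq)
        finally show ?thesis using d1 oe by (metis I_r_closed)
      qed
      ultimately have "e \<oplus> n = e" using uq by simp
      then have n0: "n = \<zero>" using ec nc
        by (metis add.l_cancel_one' )
      have A: "e \<otimes> x = e \<otimes> x \<otimes> e"
      proof -
        have "n = e \<otimes> x \<ominus> e \<otimes> x \<otimes> e" unfolding n_def using ec x by (simp add: minus_eq r_distr r_minus)
        then have "e \<otimes> x \<ominus> e \<otimes> x \<otimes> e = \<zero>" using n0 by simp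
        then show ?thesis using ec x by (simp del: r_right_minus_eq add: r_right_minus_eq[symmetric])
      qed
      define m where "m = (\<one> \<ominus> e) \<otimes> x \<otimes> e"
      have mc: "m \<in> carrier R" unfolding m_def using ec x oe by simp
      have me: "m \<otimes> e = m" unfolding m_def using ec x oe ee by (simp add: m_assoc)
      have em: "e \<otimes> m = \<zero>" unfolding m_def using ec x oe e1 by (simp add: m_assoc[symmetric])
      have mm: "m \<otimes> m = \<zero>"
      proof -
        have "m \<otimes> (e \<otimes> m) = (m \<otimes> e) \<otimes> m" using mc ec by (simp add: m_assoc)
        then have "m \<otimes> m = m \<otimes> (e \<otimes> m)" using me by simp
        then show ?thesis using em mc by simp
      qed
      have "idem R (e \<oplus> m)" using idem_add[OF R e mc mm] em me mc by simp
      moreover have "(e \<oplus> m) \<ominus> e = m" using ec mc by (simp add: minus_eq a_comm[of e m] a_assoc r_neg)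
      moreover have "m \<in> J"
      proof -
        have "(\<one> \<ominus> e) \<otimes> (x \<otimes> e \<ominus> e \<otimes> x) = m \<ominus> ((\<one> \<ominus> e) \<otimes> e) \<otimes> x"
          unfolding m_def using ec x oe by (simp add: minus_eq r_distr r_minus m_assoc)
        also have "\<dots> = m" using e2 x mc by (simp add: minus_eq)
        finally show ?thesis using d2 oe by (metis I_l_closed)
      qed
      ultimately have "e \<oplus> m = e" using uq by simp
      then have m0: "m = \<zero>" using ec mc
        by (metis add.l_cancel_one' )
      have B: "x \<otimes> e = e \<otimes> x \<otimes> e"
      proof -
        have "m = x \<otimes> e \<ominus> e \<otimes> x \<otimes> e" unfolding m_def using ec x by (simp add: minus_eq l_distr l_minus)
        then have "x \<otimes> e \<ominus> e \<otimes> x \<otimes> e = \<zero>" using m0 by simp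
        then show ?thesis using ec x by (simp del: r_right_minus_eq add: r_right_minus_eq[symmetric])
      qed
      show "e \<otimes> x = x \<otimes> e" using A B by simp
    qed
  qed
qed

end
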